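(* Let $\alpha_1,\alpha_2,\alpha_3\in\mathbb{C}$. For arrays $\mathbf{x}=(x_s)_{s\in\mathbb{Z}}$, $\mathbf{y}=(y_s)_{s\in\mathbb{Z}}$ and $v\in\mathbb{Z}$ write $z_i=x_{v+i}$, $w_i=y_{v+i}$, and $D=\alpha_3^2z_1^6+2\alpha_2\alpha_3z_0z_1^4z_2+(\alpha_2^2-4\alpha_1)z_0^2z_1^2z_2^2-4\alpha_3z_0^3z_2^3$. Consider the conditions (for all $v\in\mathbb{Z}$): (E) $z_0^2z_3^2+\alpha_1z_1^2z_2^2+\alpha_2z_0z_1z_2z_3+\alpha_3(z_0z_2^3+z_1^3z_3)=0$; (Coh) $z_0^2z_3=z_{-1}z_2^2$; (R1) $z_3=\dfrac{-\alpha_3z_1^3-\alpha_2z_0z_1z_2+w_1}{2z_0^2}$; (R2) $w_2=\dfrac{\alpha_3^2z_1^6+\alpha_2\alpha_3z_0z_1^4z_2+2\alpha_3z_0^3z_2^3+w_1^2+(-2\alpha_3z_1^3-\alpha_2z_0z_1z_2)w_1}{2z_0^3}$; (S) $w_1^2=D$. (a) For any $\mathbf{x}\in(\mathbb{C}^* )^{\mathbb{Z}}$ satisfying (E) and (Coh) there exists $\mathbf{y}\in\mathbb{C}^{\mathbb{Z}}$ such that $\mathbf{x},\mathbf{y}$ satisfy (R1), (R2), (S). (b) Conversely, if $\mathbf{x}\in(\mathbb{C}^* )^{\mathbb{Z}}$ and $\mathbf{y}\in\mathbb{C}^{\mathbb{Z}}$ satisfy (R1), (R2), (S), then $\mathbf{x}$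 satisfies (E) and (Coh). *)

theory Defs
  imports Complex_Main
begin

definition condE :: "complex \<Rightarrow> complex \<Rightarrow> complex \<Rightarrow> (int \<Rightarrow> complex) \<Rightarrow> int \<Rightarrow> bool" where
  "condE a1 a2 a3 x v \<longleftrightarrow>
     (let z = (\<lambda>i. x (v + i)) in
      (z 0)^2 * (z 3)^2 + a1 * (z 1)^2 * (z 2)^2 + a2 * z 0 * z 1 * z 2 * z 3
      + a3 * (z 0 * (z 2)^3 + (z 1)^3 * z 3) = 0)"

definition condCoh :: "(int \<Rightarrow> complex) \<Rightarrow> int \<Rightarrow> bool" where
  "condCoh x v \<longleftrightarrow>
     (let z = (\<lambda>i. x (v + i)) in (z 0)^2 * z 3 = z (-1) * (z 2)^2)"

definition condR1 :: "complex \<Rightarrow> complex \<Rightarrow> complex \<Rightarrow> (int \<Rightarrow> complex) \<Rightarrow> (int \<Rightarrow> complex) \<Rightarrow> int \<Rightarrow> bool" where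
  "condR1 a1 a2 a3 x y v \<longleftrightarrow>
     (let z = (\<lambda>i. x (v + i)); w = (\<lambda>i. y (v + i)) in
      z 3 = (- a3 * (z 1)^3 - a2 * z 0 * z 1 * z 2 + w 1) / (2 * (z 0)^2))"

definition condR2 :: "complex \<Rightarrow> complex \<Rightarrow> complex \<Rightarrow> (int \<Rightarrow> complex) \<Rightarrow> (int \<Rightarrow> complex) \<Rightarrow> int \<Rightarrow> bool" where
  "condR2 a1 a2 a3 x y v \<longleftrightarrow>
     (let z = (\<lambda>i. x (v + i)); w = (\<lambda>i. y (v + i)) in
      w 2 = (a3^2 * (z 1)^6 + a2 * a3 * z 0 * (z 1)^4 * z 2 + 2 * a3 * (z 0)^3 * (z 2)^3
             + (w 1)^2 + (- 2 * a3 * (z 1)^3 - a2 * z 0 * z 1 * z 2) * w 1) / (2 * (z 0)^3))"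

definition discD :: "complex \<Rightarrow> complex \<Rightarrow> complex \<Rightarrow> (int \<Rightarrow> complex) \<Rightarrow> int \<Rightarrow> complex" where
  "discD a1 a2 a3 x v =
     (let z = (\<lambda>i. x (v + i)) in
      a3^2 * (z 1)^6 + 2 * a2 * a3 * z 0 * (z 1)^4 * z 2
      + (a2^2 - 4 * a1) * (z 0)^2 * (z 1)^2 * (z 2)^2 - 4 * a3 * (z 0)^3 * (z 2)^3)"

definition condS :: "complex \<Rightarrow> complex \<Rightarrow> complex \<Rightarrow> (int \<Rightarrow> complex) \<Rightarrow> (int \<Rightarrow> complex) \<Rightarrow> int \<Rightarrow> bool" where
  "condS a1 a2 a3 x y v \<longleftrightarrow> (y (v + 1))^2 = discD a1 a2 a3 x v"

end

theory Submission
  imports Defs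
begin

lemma R1iff:
  fixes z0 z1 z2 z3 w1 a2 a3 :: complex
  assumes "z0 \<noteq> 0"
  shows "(z3 = (- a3 * z1^3 - a2 * z0 * z1 * z2 + w1) / (2 * z0^2)) \<longleftrightarrow>
         w1 = 2 * z0^2 * z3 + a3 * z1^3 + a2 * z0 * z1 * z2"
  using assms by (auto simp: field_simps)

lemma R2iff:
  fixes z0 z1 z2 z3 w1 w2 a2 a3 :: complex
  assumes "z0 \<noteq> 0" "w1 = 2 * z0^2 * z3 + a3 * z1^3 + a2 * z0 * z1 * z2"
  shows "(w2 = (a3^2 * z1^6 + a2 * a3 * z0 * z1^4 * z2 + 2 * a3 * z0^3 * z2^3
             + w1^2 + (- 2 * a3 * z1^3 - a2 * z0 * z1 * z2) * w1) / (2 * z0^3)) \<longleftrightarrow>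
         w2 = 2 * z0 * z3^2 + a3 * z2^3 + a2 * z1 * z2 * z3"
proof -
  have "a3^2 * z1^6 + a2 * a3 * z0 * z1^4 * z2 + 2 * a3 * z0^3 * z2^3
             + w1^2 + (- 2 * a3 * z1^3 - a2 * z0 * z1 * z2) * w1
        = (2 * z0 * z3^2 + a3 * z2^3 + a2 * z1 * z2 * z3) * (2 * z0^3)"
    unfolding assms(2) by (simp add: algebra_simps power2_eq_square power3_eq_cube eval_nat_numeral)
  then have "(a3^2 * z1^6 + a2 * a3 * z0 * z1^4 * z2 + 2 * a3 * z0^3 * z2^3
             + w1^2 + (- 2 * a3 * z1^3 - a2 * z0 * z1 * z2) * w1) / (2 * z0^3)
        = 2 * z0 * z3^2 + a3 * z2^3 + a2 * z1 * z2 * z3"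
    using assms(1) by simp
  then show ?thesis by simp
qed

lemma Siff:
  fixes z0 z1 z2 z3 w1 a1 a2 a3 :: complex
  assumes "z0 \<noteq> 0" "w1 = 2 * z0^2 * z3 + a3 * z1^3 + a2 * z0 * z1 * z2"
  shows "(w1^2 = a3^2 * z1^6 + 2 * a2 * a3 * z0 * z1^4 * z2
      + (a2^2 - 4 * a1) * z0^2 * z1^2 * z2^2 - 4 * a3 * z0^3 * z2^3) \<longleftrightarrow>
      (z0^2 * z3^2 + a1 * z1^2 * z2^2 + a2 * z0 * z1 * z2 * z3
      + a3 * (z0 * z2^3 + z1^3 * z3) = 0)"
proof -
  have "w1^2 - (a3^2 * z1^6 + 2 * a2 * a3 * z0 * z1^4 * z2
      + (a2^2 - 4 * a1) * z0^2 * z1^2 * z2^2 - 4 * a3 * z0^3 * z2^3)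
     = 4 * z0^2 * (z0^2 * z3^2 + a1 * z1^2 * z2^2 + a2 * z0 * z1 * z2 * z3
      + a3 * (z0 * z2^3 + z1^3 * z3))"
    unfolding assms(2) by (simp add: algebra_simps power2_eq_square power3_eq_cube eval_nat_numeral)
  then show ?thesis using assms(1)
    by (metis (no_types, lifting) eq_iff_diff_eq_0 mult_eq_0_iff power_eq_0_iff zero_neq_numeral)
qed

theorem theorem6p4:
  fixes a1 a2 a3 :: complex
  shows "(\<forall>x :: int \<Rightarrow> complex. (\<forall>s. x s \<noteq> 0) \<longrightarrow>
            (\<forall>v. condE a1 a2 a3 x v) \<longrightarrow> (\<forall>v. condCoh x v) \<longrightarrow>
            (\<exists>y :: int \<Rightarrow> complex. \<forall>v. condR1 a1 a2 a3 x y v \<and> condR2 a1 a2 a3 x y v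
                                          \<and> condS a1 a2 a3 x y v))
       \<and> (\<forall>(x :: int \<Rightarrow> complex) (y :: int \<Rightarrow> complex). (\<forall>s. x s \<noteq> 0) \<longrightarrow>
            (\<forall>v. condR1 a1 a2 a3 x y v \<and> condR2 a1 a2 a3 x y v \<and> condS a1 a2 a3 x y v) \<longrightarrow>
            (\<forall>v. condE a1 a2 a3 x v) \<and> (\<forall>v. condCoh x v))"
proof (intro conjI allI impI)
  fix x :: "int \<Rightarrow> complex"
  assume nz: "\<forall>s. x s \<noteq> 0" and E: "\<forall>v. condE a1 a2 a3 x v" and C: "\<forall>v. condCoh x v"
  define y where "y s = 2 * (x (s - 1))^2 * x (s + 2) + a3 * (x s)^3 + a2 * x (s - 1) * x s * x (s + 1)" for s
  show "\<exists>y. \<forall>v. condR1 a1 a2 a3 x y v \<and> condR2 a1 a2 a3 x y v \<and> condS a1 a2 a3 x y v"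
  proof (intro exI allI conjI)
    fix v
    have w1: "y (v + 1) = 2 * (x (v + 0))^2 * x (v + 3) + a3 * (x (v + 1))^3 + a2 * x (v + 0) * x (v + 1) * x (v + 2)"
      unfolding y_def by (simp add: add.assoc)
    have "condCoh x (v + 1)" using C by blast
    hence c: "(x (v + 1))^2 * x (v + 4) = x (v + 0) * (x (v + 3))^2"
      unfolding condCoh_def Let_def by (simp add: add.assoc)
    have w2: "y (v + 2) = 2 * x (v + 0) * (x (v + 3))^2 + a3 * (x (v + 2))^3 + a2 * x (v + 1) * x (v + 2) * x (v + 3)"
    proof -
      have e: "v + 2 - 1 = v + 1" "v + 2 + 2 = v + 4" "v + 2 + 1 = v + 3" by simp_all
      have "y (v + 2) = 2 * (x (v + 1))^2 * x (v + 4) + a3 * (x (v + 2))^3 + a2 * x (v + 1) * x (v + 2) * x (v + 3)"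
        unfolding y_def e by simp
      then show ?thesis using c by simp
    qed
    have n0: "x (v + 0) \<noteq> 0" using nz by blast
    show "condR1 a1 a2 a3 x y v"
      unfolding condR1_def Let_def by (rule R1iff[OF n0, THEN iffD2], rule w1)
    show "condR2 a1 a2 a3 x y v"
      unfolding condR2_def Let_def by (rule R2iff[OF n0 w1, THEN iffD2], rule w2)
    have "condE a1 a2 a3 x v" using E by blast
    then show "condS a1 a2 a3 x y v"
      unfolding condS_def discD_def condE_def Let_def
      by (subst (asm) Siff[OF n0 w1, symmetric]) simp
  qed
next
  fix x y :: "int \<Rightarrow> complex"
  assume nz: "\<forall>s. x s \<noteq> 0" and R: "\<forall>v. condR1 a1 a2 a3 x y v \<and> condR2 a1 a2 a3 x y v \<and> condS a1 a2 a3 x y v"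
  have w1: "y (v + 1) = 2 * (x (v + 0))^2 * x (v + 3) + a3 * (x (v + 1))^3 + a2 * x (v + 0) * x (v + 1) * x (v + 2)" for v
  proof -
    have n0: "x (v + 0) \<noteq> 0" using nz by blast
    have "condR1 a1 a2 a3 x y v" using R by blast
    then show ?thesis unfolding condR1_def Let_def by (rule R1iff[OF n0, THEN iffD1])
  qed
  show "condE a1 a2 a3 x v" for v
  proof -
    have n0: "x (v + 0) \<noteq> 0" using nz by blast
    have "condS a1 a2 a3 x y v" using R by blast
    then show ?thesis
      unfolding condS_def discD_def condE_def Let_def by (rule Siff[OF n0 w1[of v], THEN iffD1])
  qed
  show "condCoh x v" for v
  proof -
    define u where "u = v - 1"
    have n0: "x (u + 0) \<noteq> 0" using nz by blast
    have "condR2 a1 a2 a3 x y u" using R by blast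
    hence a: "y (u + 2) = 2 * x (u + 0) * (x (u + 3))^2 + a3 * (x (u + 2))^3 + a2 * x (u + 1) * x (u + 2) * x (u + 3)"
      unfolding condR2_def Let_def by (rule R2iff[OF n0 w1[of u], THEN iffD1])
    have b: "y ((u + 1) + 1) = 2 * (x ((u + 1) + 0))^2 * x ((u + 1) + 3) + a3 * (x ((u + 1) + 1))^3 + a2 * x ((u + 1) + 0) * x ((u + 1) + 1) * x ((u + 1) + 2)"
      by (rule w1)
    have "2 * x (u + 0) * (x (u + 3))^2 = 2 * (x (u + 1))^2 * x (u + 4)"
      using a b by (simp add: add.assoc)
    hence "(x (u + 1))^2 * x (u + 4) = x (u + 0) * (x (u + 3))^2" by simp
    moreover have "u + 1 = v + 0" "u + 4 = v + 3" "u + 0 = v + -1" "u + 3 = v + 2"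
      unfolding u_def by simp_all
    ultimately show ?thesis unfolding condCoh_def Let_def by metis
  qed
qed

end
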